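(* Let $m\ge1$ and $\alpha,\beta^1,\dots,\beta^m\in\mathrm{ord}$. If $\alpha<\beta^1,\dots,\beta^m$, then $\alpha\le\beta^1,\dots,\beta^m$.
   Context: Work constructively. Let $\mathfrak F$ be a set of index sets containing $\mathbb N$ and each $\mathbb N_k=\{n\in\mathbb N:n<k\}$ ($k\ge0$), closed (up to isomorphism) under finitely enumerated subsets, sets of finitely enumerated subsets, and disjoint unions indexed by elements of $\mathfrak F$. A finitely enumerated subset of $A$ is one given by a map $\mathbb N_k\to A$; write $F\subseteq_f I$. The set $\mathrm{ord}$ is inductively generated by $\underline 0$ and, for every family $(\alpha_i)_{i\in I}$ with $I\in\mathfrak F$, $\alpha_i\in\mathrm{ord}$, an element $\mathrm S(\alpha_i)_{i\in I}$; for such $\alpha$, $I_\alpha=I$ and $\alpha_i$ are its definitional subordinals; $I_{\underline 0}=\emptyset$. For a finite list $F$ in $I_\alpha$, $\alpha_F$ is the list of the $\alpha_i$, $i\in F$. Relations between an element and a nonempty finite list, by simultaneous induction: $\alpha\le\beta^1,\dots,\beta^m$ means $\alpha_i<\beta^1,\dots,\beta^m$ for all $i\in I_\alpha$; $\alpha<\beta^1,\dots,\beta^m$ means there exist $F_1\subseteq_f I_{\beta^1},\dots,F_m\subseteq_f I_{\beta^m}$, not all empty, with $\alpha\le\beta^1_{F_1},\dots,\beta^m_{F_m}$ (concatenated list). *)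

theory Defs
  imports Main
begin

text \<open>Index sets are subsets of a fixed ambient type 'i. An ordinal S(alpha_i)_{i in I}
  is represented by the index set I together with a function g; only the values of g on I
  matter (ordinals are compared only via the relations below).\<close>

datatype 'i ord = OZero | OS "'i set" "'i \<Rightarrow> 'i ord"

fun idx :: "'i ord \<Rightarrow> 'i set" where
  "idx OZero = {}"
| "idx (OS I g) = I"

fun sub :: "'i ord \<Rightarrow> 'i \<Rightarrow> 'i ord" where
  "sub OZero i = OZero"
| "sub (OS I g) i = g i"

text \<open>A finitely enumerated subset F of I is a map N_k -> I, i.e. a list over I.\<close>

definition sublist_sel :: "'i ord list \<Rightarrow> 'i list list \<Rightarrow> 'i ord list" where
  "sublist_sel bs Fs = concat (map (\<lambda>(b, F). map (sub b) F) (zip bs Fs))"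

definition admissible_sel :: "'i ord list \<Rightarrow> 'i list list \<Rightarrow> bool" where
  "admissible_sel bs Fs \<longleftrightarrow> length Fs = length bs
     \<and> (\<forall>j < length bs. set (Fs ! j) \<subseteq> idx (bs ! j))
     \<and> (\<exists>j < length bs. Fs ! j \<noteq> [])"

primrec ord_le :: "'i ord \<Rightarrow> 'i ord list \<Rightarrow> bool" where
  "ord_le OZero bs = True"
| "ord_le (OS I g) bs =
     (\<forall>i\<in>I. \<exists>Fs. admissible_sel bs Fs \<and> ord_le (g i) (sublist_sel bs Fs))"

definition ord_less :: "'i ord \<Rightarrow> 'i ord list \<Rightarrow> bool" where
  "ord_less a bs \<longleftrightarrow> (\<exists>Fs. admissible_sel bs Fs \<and> ord_le a (sublist_sel bs Fs))"

lemma ord_le_OS_unfold: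
  "ord_le (OS I g) bs = (\<forall>i\<in>I. ord_less (g i) bs)"
  by (simp add: ord_less_def)

definition index_family :: "'i set set \<Rightarrow> bool" where
  "index_family \<F> \<longleftrightarrow>
     (\<exists>I\<in>\<F>. \<exists>f. bij_betw f (UNIV :: nat set) I)
   \<and> (\<forall>k::nat. \<exists>I\<in>\<F>. \<exists>f. bij_betw f {..<k} I)
   \<and> (\<forall>I\<in>\<F>. \<forall>F::'i list. set F \<subseteq> I \<longrightarrow> (\<exists>J\<in>\<F>. \<exists>f. bij_betw f {..<length F} J))
   \<and> (\<forall>I\<in>\<F>. \<exists>J\<in>\<F>. \<exists>f. bij_betw f {F::'i list. set F \<subseteq> I} J)
   \<and> (\<forall>I\<in>\<F>. \<forall>J. (\<forall>i\<in>I. J i \<in> \<F>) \<longrightarrow> (\<exists>K\<in>\<F>. \<exists>f. bij_betw f (SIGMA i:I. J i) K))"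

inductive in_ord :: "'i set set \<Rightarrow> 'i ord \<Rightarrow> bool" for \<F> where
  "in_ord \<F> OZero"
| "I \<in> \<F> \<Longrightarrow> (\<forall>i\<in>I. in_ord \<F> (g i)) \<Longrightarrow> in_ord \<F> (OS I g)"

end

theory Submission
  imports Defs
begin

lemma sel_mono:
  "\<forall>bs Fs. admissible_sel bs Fs \<and> ord_le x (sublist_sel bs Fs) \<longrightarrow> ord_le x bs"
proof (induction x)
  case OZero
  then show ?case by simp
next
  case (OS I g)
  show ?case
  proof (intro allI impI)
    fix bs Fs
    assume h: "admissible_sel bs Fs \<and> ord_le (OS I g) (sublist_sel bs Fs)"
    show "ord_le (OS I g) bs"
      unfolding ord_le.simps
    proof
      fix i assume i: "i \<in> I"
      from h i obtain Gs where "admissible_sel (sublist_sel bs Fs) Gs"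
        "ord_le (g i) (sublist_sel (sublist_sel bs Fs) Gs)" by auto
      with OS.IH[of "g i"] have "ord_le (g i) (sublist_sel bs Fs)" by blast
      with h show "\<exists>Fs. admissible_sel bs Fs \<and> ord_le (g i) (sublist_sel bs Fs)" by blast
    qed
  qed
qed

theorem lemma4p3:
  fixes \<F> :: "'i set set" and a :: "'i ord" and bs :: "'i ord list"
  assumes "index_family \<F>"
    and "in_ord \<F> a"
    and "\<forall>b\<in>set bs. in_ord \<F> b"
    and "bs \<noteq> []"
    and "ord_less a bs"
  shows "ord_le a bs"
  using assms(5) sel_mono[of a] unfolding ord_less_def by blast

end
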